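(* Let $G$ be a graph with $n$ nodes and $\pi\in S_n$. Then $\pi$ is representable by $G$ if and only if there is no $\mathbf y\in\mathbb{R}^{n-1}$ with $(\Xi R_\pi C_G)^T\mathbf y=\mathbf 0$, $\mathbf y\ge\mathbf 0$ and $\mathbf y\ne\mathbf 0$.
   Context: Graphs are finite directed graphs with nodes $\{0,\dots,n-1\}$; $d_G(x,y)$ is the shortest directed path length from $x$ to $y$ ($\infty$ if none). The distance-count matrix $C_G\in\mathbb{R}^{n\times n}$ has $(C_G)_{i,k}=|\{j: d_G(j,i)=k\}|$ (indices from 0). For $\mathbf a\in\mathbb{R}^{\mathbb{N}}$ the linear centrality is $f^{\mathbf a}_G(i)=\sum_{k=0}^{n-1}(C_G)_{i,k}a_k$. $\pi$ is representable by $G$ if there is $\mathbf a$ with $f^{\mathbf a}_G(\pi(0))>f^{\mathbf a}_G(\pi(1))>\dots>f^{\mathbf a}_G(\pi(n-1))$. $R_\pi$ is the $n\times n$ 0/1 matrix with $(R_\pi)_{ij}=1$ iff $\pi(i)=j$. $\Xi\in\mathbb{R}^{(n-1)\times n}$ is the matrix with $\Xi_{i,i}=-1$, $\Xi_{i,i+1}=1$ for $0\le i\le n-2$, and all other entries $0$. Inequalities between vectors are entrywise. *)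

theory Defs
  imports "Jordan_Normal_Form.Matrix" "HOL-Combinatorics.Permutations" "HOL-Library.Extended_Nat"
begin

definition graph :: "nat \<Rightarrow> (nat \<times> nat) set \<Rightarrow> bool" where
  "graph n E \<longleftrightarrow> E \<subseteq> {0..<n} \<times> {0..<n}"

definition gdist :: "(nat \<times> nat) set \<Rightarrow> nat \<Rightarrow> nat \<Rightarrow> enat" where
  "gdist E x y = (if \<exists>k. (x, y) \<in> E ^^ k then enat (LEAST k. (x, y) \<in> E ^^ k) else \<infinity>)"

definition dist_count_mat :: "nat \<Rightarrow> (nat \<times> nat) set \<Rightarrow> real mat" where
  "dist_count_mat n E = mat n n (\<lambda>(i, k). real (card {j \<in> {0..<n}. gdist E j i = enat k}))"

definition lin_centrality :: "nat \<Rightarrow> (nat \<times> nat) set \<Rightarrow> (nat \<Rightarrow> real) \<Rightarrow> nat \<Rightarrow> real" where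
  "lin_centrality n E a i = (\<Sum>k<n. dist_count_mat n E $$ (i, k) * a k)"

definition representable :: "nat \<Rightarrow> (nat \<times> nat) set \<Rightarrow> (nat \<Rightarrow> nat) \<Rightarrow> bool" where
  "representable n E \<pi> \<longleftrightarrow> (\<exists>a :: nat \<Rightarrow> real.
     \<forall>i. i + 1 < n \<longrightarrow> lin_centrality n E a (\<pi> i) > lin_centrality n E a (\<pi> (i + 1)))"

definition perm_mat :: "nat \<Rightarrow> (nat \<Rightarrow> nat) \<Rightarrow> real mat" where
  "perm_mat n \<pi> = mat n n (\<lambda>(i, j). if \<pi> i = j then 1 else 0)"

definition Xi_mat :: "nat \<Rightarrow> real mat" where
  "Xi_mat n = mat (n - 1) n (\<lambda>(i, j). if j = i then -1 else if j = i + 1 then 1 else 0)"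

end

theory Submission
  imports Defs "HOL-Analysis.Analysis"
begin

lemma simplex_compact:
  "compact ((PiE UNIV (\<lambda>i::nat. if i < m then {0..1::real} else {0})) \<inter> {y. (\<Sum>i<m. y i) = 1})"
proof (rule compact_Int_closed)
  have "compactin (product_topology (\<lambda>i. euclidean) UNIV) (PiE UNIV (\<lambda>i::nat. if i < m then {0..1::real} else {0}))"
    by (subst compactin_PiE) auto
  then show "compact (PiE UNIV (\<lambda>i::nat. if i < m then {0..1::real} else {0}))"
    by (simp add: euclidean_product_topology compactin_euclidean_iff)
  show "closed {y::nat\<Rightarrow>real. (\<Sum>i<m. y i) = 1}"
    by (intro closed_Collect_eq continuous_intros continuous_on_product_coordinates)
qed

lemma small_t:
  fixes b D :: real
  assumes "\<And>t. 0 < t \<Longrightarrow> t \<le> 1 \<Longrightarrow> 2 * b + t * D \<ge> 0"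
  shows "b \<ge> 0"
proof (rule ccontr)
  assume "\<not> b \<ge> 0"
  hence b: "b < 0" by simp
  from assms[of 1] have D: "D > 0" using b by simp
  define t where "t = min 1 (- b / D)"
  have "0 < t" "t \<le> 1" using b D by (auto simp: t_def field_simps)
  have "t * D \<le> - b" using D b unfolding t_def
    by (metis min.cobounded2 mult.commute pos_le_divide_eq)
  with assms[OF \<open>0 < t\<close> \<open>t \<le> 1\<close>] b show False by linarith
qed

lemma gordan:
  fixes M :: "nat \<Rightarrow> nat \<Rightarrow> real"
  assumes noy: "\<not> (\<exists>y. (\<forall>i<m. y i \<ge> 0) \<and> (\<exists>i<m. y i \<noteq> 0) \<and> (\<forall>k<n. (\<Sum>i<m. y i * M i k) = 0))"
  shows "\<exists>a. \<forall>i<m. (\<Sum>k<n. M i k * a k) > 0"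
proof (cases "m = 0")
  case True then show ?thesis by auto
next
  case False
  define S where "S = (PiE UNIV (\<lambda>i::nat. if i < m then {0..1::real} else {0})) \<inter> {y. (\<Sum>i<m. y i) = 1}"
  define f where "f = (\<lambda>y::nat\<Rightarrow>real. \<Sum>k<n. (\<Sum>i<m. y i * M i k)^2)"
  have cS: "compact S" unfolding S_def by (rule simplex_compact)
  have e0: "(\<lambda>i. if i = 0 then 1 else 0) \<in> S" using False by (auto simp: S_def)
  have cf: "continuous_on S f" unfolding f_def
    by (intro continuous_intros continuous_on_subset[OF continuous_on_product_coordinates]) auto
  obtain y where yS: "y \<in> S" and ymin: "\<And>z. z \<in> S \<Longrightarrow> f y \<le> f z"
    using continuous_attains_inf[OF cS _ cf] e0 by blast
  define w where "w k = (\<Sum>i<m. y i * M i k)" for k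
  have fy: "f y = (\<Sum>k<n. (w k)^2)" by (simp add: f_def w_def)
  have ynn: "\<forall>i<m. y i \<ge> 0" and ysum: "(\<Sum>i<m. y i) = 1" using yS by (auto simp: S_def PiE_iff) (metis atLeastAtMost_iff)
  show ?thesis
  proof (cases "f y = 0")
    case True
    have "\<forall>k<n. w k = 0"
    proof (intro allI impI)
      fix k assume "k < n"
      have "(w k)^2 \<le> (\<Sum>k<n. (w k)^2)"
        using \<open>k < n\<close> by (intro member_le_sum) auto
      then show "w k = 0" using True fy by (simp add: sum_nonneg)
    qed
    moreover have "\<exists>i<m. y i \<noteq> 0"
    proof (rule ccontr)
      assume "\<not> ?thesis" then have "(\<Sum>i<m. y i) = 0" by simp
      with ysum show False by simp
    qed
    ultimately show ?thesis using noy ynn by (auto simp: w_def)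
  next
    case False
    have fpos: "f y > 0" using False fy by (metis sum_nonneg zero_le_power2 order_le_less)
    show ?thesis
    proof (intro exI allI impI)
      fix j assume "j < m"
      define d where "d k = M j k - w k" for k
      have key: "2 * (\<Sum>k<n. w k * d k) + t * (\<Sum>k<n. (d k)^2) \<ge> 0" if t: "0 < t" "t \<le> 1" for t
      proof -
        define z where "z i = (1 - t) * y i + t * (if i = j then 1 else 0)" for i
        have zS: "z \<in> S"
        proof -
          have "\<forall>i. z i \<in> (if i < m then {0..1} else {0})"
          proof
            fix i show "z i \<in> (if i < m then {0..1} else {0})"
            proof (cases "i < m")
              case True
              then have "0 \<le> y i" "y i \<le> 1" using yS by (auto simp: S_def PiE_iff) (metis atLeastAtMost_iff)+
              then show ?thesis using True t
                by (auto simp: z_def) (smt (verit) mult_left_le mult_nonneg_nonneg)+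
            next
              case False then have "y i = 0" using yS by (auto simp: S_def PiE_iff) (metis singletonD)
              then show ?thesis using False \<open>j < m\<close> by (auto simp: z_def)
            qed
          qed
          moreover have "(\<Sum>i<m. z i) = 1"
            using ysum \<open>j < m\<close> by (simp add: z_def sum.distrib sum_distrib_left[symmetric] )
          ultimately show ?thesis by (auto simp: S_def PiE_iff)
        qed
        have zw: "(\<Sum>i<m. z i * M i k) = w k + t * d k" for k
        proof -
          have "(\<Sum>i<m. z i * M i k) = (\<Sum>i<m. (1-t) * (y i * M i k) + t * (if i = j then M i k else 0))"
            by (rule sum.cong) (auto simp: z_def algebra_simps)
          also have "\<dots> = (1-t) * w k + t * M j k"
            using \<open>j < m\<close> by (simp add: sum.distrib sum_distrib_left[symmetric] w_def)
          finally show ?thesis by (simp add: d_def algebra_simps)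
        qed
        have "f z = (\<Sum>k<n. (w k + t * d k)^2)" by (simp add: f_def zw)
        also have "\<dots> = f y + t * (2 * (\<Sum>k<n. w k * d k) + t * (\<Sum>k<n. (d k)^2))"
          by (simp add: fy power2_eq_square algebra_simps sum.distrib sum_distrib_left)
        finally have "f y \<le> f y + t * (2 * (\<Sum>k<n. w k * d k) + t * (\<Sum>k<n. (d k)^2))"
          using ymin[OF zS] by simp
        then show ?thesis using t by (simp add: zero_le_mult_iff)
      qed
      have "(\<Sum>k<n. w k * d k) \<ge> 0" by (rule small_t) (use key in auto)
      then have "(\<Sum>k<n. w k * M j k) - f y \<ge> 0"
        by (simp add: d_def fy right_diff_distrib power2_eq_square sum_subtractf)
      then show "(\<Sum>k<n. M j k * w k) > 0" using fpos by (simp add: mult.commute)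
    qed
  qed
qed

lemma gordan_easy:
  fixes M :: "nat \<Rightarrow> nat \<Rightarrow> real"
  assumes a: "\<forall>i<m. (\<Sum>k<n. M i k * a k) > 0"
    and y: "\<forall>i<m. y i \<ge> 0" "\<exists>i<m. y i \<noteq> 0" "\<forall>k<n. (\<Sum>i<m. y i * M i k) = 0"
  shows False
proof -
  obtain j where j: "j < m" "y j \<noteq> 0" using y by auto
  have "(\<Sum>i<m. y i * (\<Sum>k<n. M i k * a k)) = (\<Sum>k<n. (\<Sum>i<m. y i * M i k) * a k)"
    by (simp add: sum_distrib_left sum_distrib_right mult.assoc sum.swap[of _ "{..<m}"])
  also have "\<dots> = 0" using y by simp
  finally have z: "(\<Sum>i<m. y i * (\<Sum>k<n. M i k * a k)) = 0" .
  have "y j * (\<Sum>k<n. M j k * a k) \<le> (\<Sum>i<m. y i * (\<Sum>k<n. M i k * a k))"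
    using j a y by (intro member_le_sum) auto
  moreover have "y j * (\<Sum>k<n. M j k * a k) > 0" using j a y
    by (metis mult_pos_pos order_le_less)
  ultimately show False using z by simp
qed

lemma sum_shift_delta:
  fixes f :: "nat \<Rightarrow> real"
  assumes "i + 1 < n"
  shows "(\<Sum>l<n. (if l = i then -1 else if l = i + 1 then 1 else 0) * f l) = f (i+1) - f i"
proof -
  have "(\<Sum>l<n. (if l = i then -1 else if l = i + 1 then 1 else 0) * f l)
      = (\<Sum>l<n. (if l = i + 1 then f l else 0) - (if l = i then f l else 0))"
    by (rule sum.cong) auto
  also have "\<dots> = f (i+1) - f i" using assms by (simp add: sum_subtractf)
  finally show ?thesis .
qed

lemma prod_entry:
  assumes p: "\<pi> permutes {0..<n}" and i: "i < n - 1" and k: "k < n"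
  shows "(Xi_mat n * perm_mat n \<pi> * dist_count_mat n E) $$ (i, k)
     = dist_count_mat n E $$ (\<pi> (i+1), k) - dist_count_mat n E $$ (\<pi> i, k)"
proof -
  let ?C = "dist_count_mat n E"
  have pi_lt: "\<pi> l < n" if "l < n" for l using p that
    by (metis atLeastLessThan_iff permutes_in_image zero_le)
  have XR: "(Xi_mat n * perm_mat n \<pi>) $$ (i, j) = (if \<pi> (i+1) = j then 1 else 0) - (if \<pi> i = j then 1 else 0)"
    if j: "j < n" for j
  proof -
    have "(Xi_mat n * perm_mat n \<pi>) $$ (i, j) = (\<Sum>l<n. (if l = i then -1 else if l = i + 1 then 1 else 0) * (if \<pi> l = j then 1 else 0))"
      using i j by (auto simp: Xi_mat_def perm_mat_def scalar_prod_def lessThan_atLeast0 intro!: sum.cong)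
    also have "\<dots> = (if \<pi> (i+1) = j then 1 else 0) - (if \<pi> i = j then 1 else 0)"
      using i by (subst sum_shift_delta) auto
    finally show ?thesis .
  qed
  have "(Xi_mat n * perm_mat n \<pi> * ?C) $$ (i, k) = (\<Sum>j<n. (Xi_mat n * perm_mat n \<pi>) $$ (i, j) * ?C $$ (j, k))"
    using i k by (auto simp: Xi_mat_def perm_mat_def scalar_prod_def lessThan_atLeast0 dist_count_mat_def intro!: sum.cong)
  also have "\<dots> = (\<Sum>j<n. (if j = \<pi> (i+1) then ?C $$ (j, k) else 0) - (if j = \<pi> i then ?C $$ (j, k) else 0))"
    by (rule sum.cong) (auto simp: XR)
  also have "\<dots> = ?C $$ (\<pi> (i+1), k) - ?C $$ (\<pi> i, k)"
    using i pi_lt[of i] pi_lt[of "i+1"] by (simp add: sum_subtractf)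
  finally show ?thesis .
qed

theorem theorem6:
  fixes n :: nat and E :: "(nat \<times> nat) set" and \<pi> :: "nat \<Rightarrow> nat"
  assumes "graph n E" and "\<pi> permutes {0..<n}"
  shows "representable n E \<pi> \<longleftrightarrow>
    \<not> (\<exists>y \<in> carrier_vec (n - 1).
          transpose_mat (Xi_mat n * perm_mat n \<pi> * dist_count_mat n E) *\<^sub>v y = 0\<^sub>v n
          \<and> (\<forall>i < n - 1. y $ i \<ge> 0) \<and> y \<noteq> 0\<^sub>v (n - 1))"
proof -
  let ?C = "dist_count_mat n E"
  let ?P = "Xi_mat n * perm_mat n \<pi> * ?C"
  define M where "M i k = ?C $$ (\<pi> i, k) - ?C $$ (\<pi> (i+1), k)" for i k
  have pi_lt: "\<pi> l < n" if "l < n" for l using assms(2) that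
    by (metis atLeastLessThan_iff permutes_in_image zero_le)
  have dimP: "dim_row ?P = n - 1" "dim_col ?P = n"
    by (auto simp: Xi_mat_def perm_mat_def dist_count_mat_def)
  have Pent: "?P $$ (i, k) = - M i k" if "i < n - 1" "k < n" for i k
    using prod_entry[OF assms(2) that] by (simp add: M_def)
  have rep: "representable n E \<pi> \<longleftrightarrow> (\<exists>a. \<forall>i<n-1. (\<Sum>k<n. M i k * a k) > 0)"
  proof -
    have "lin_centrality n E a (\<pi> i) - lin_centrality n E a (\<pi> (i + 1)) = (\<Sum>k<n. M i k * a k)" for a i
      by (simp add: lin_centrality_def M_def sum_subtractf left_diff_distrib)
    then have "(lin_centrality n E a (\<pi> i) > lin_centrality n E a (\<pi> (i + 1))) = ((\<Sum>k<n. M i k * a k) > 0)" for a i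
      by (metis diff_gt_0_iff_gt)
    moreover have "(i + 1 < n) = (i < n - 1)" for i by auto
    ultimately show ?thesis unfolding representable_def
      by simp
  qed
  have tv: "(transpose_mat ?P *\<^sub>v y) $ k = - (\<Sum>i<n-1. y $ i * M i k)"
    if "y \<in> carrier_vec (n-1)" "k < n" for y k
  proof -
    have "(transpose_mat ?P *\<^sub>v y) $ k = (\<Sum>i<n-1. ?P $$ (i, k) * y $ i)"
      using that dimP by (auto simp: scalar_prod_def lessThan_atLeast0 mult.commute intro!: sum.cong)
    also have "\<dots> = (\<Sum>i<n-1. - (y $ i * M i k))"
      by (rule sum.cong) (auto simp: Pent that)
    finally show ?thesis by (simp add: sum_negf)
  qed
  have vecc: "(\<exists>y \<in> carrier_vec (n - 1).
          transpose_mat ?P *\<^sub>v y = 0\<^sub>v n \<and> (\<forall>i < n - 1. y $ i \<ge> 0) \<and> y \<noteq> 0\<^sub>v (n - 1))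
     \<longleftrightarrow> (\<exists>y. (\<forall>i<n-1. y i \<ge> 0) \<and> (\<exists>i<n-1. y i \<noteq> 0) \<and> (\<forall>k<n. (\<Sum>i<n-1. y i * M i k) = 0))"
  proof
    assume "\<exists>y \<in> carrier_vec (n - 1).
          transpose_mat ?P *\<^sub>v y = 0\<^sub>v n \<and> (\<forall>i < n - 1. y $ i \<ge> 0) \<and> y \<noteq> 0\<^sub>v (n - 1)"
    then obtain y where y: "y \<in> carrier_vec (n-1)" "transpose_mat ?P *\<^sub>v y = 0\<^sub>v n"
      "\<forall>i < n - 1. y $ i \<ge> 0" "y \<noteq> 0\<^sub>v (n - 1)" by blast
    have "\<exists>i<n-1. y $ i \<noteq> 0"
    proof (rule ccontr)
      assume "\<not> ?thesis"
      then have "y = 0\<^sub>v (n-1)" using y(1) by (intro eq_vecI) auto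
      with y(4) show False by simp
    qed
    moreover have "\<forall>k<n. (\<Sum>i<n-1. y $ i * M i k) = 0"
    proof (intro allI impI)
      fix k assume "k < n"
      have "(transpose_mat ?P *\<^sub>v y) $ k = 0" using y(2) \<open>k < n\<close> by simp
      then show "(\<Sum>i<n-1. y $ i * M i k) = 0" using tv[OF y(1) \<open>k < n\<close>] by simp
    qed
    ultimately show "\<exists>y. (\<forall>i<n-1. y i \<ge> 0) \<and> (\<exists>i<n-1. y i \<noteq> 0) \<and> (\<forall>k<n. (\<Sum>i<n-1. y i * M i k) = 0)"
      using y(3) by (intro exI[of _ "\<lambda>i. y $ i"]) auto
  next
    assume "\<exists>y. (\<forall>i<n-1. y i \<ge> 0) \<and> (\<exists>i<n-1. y i \<noteq> 0) \<and> (\<forall>k<n. (\<Sum>i<n-1. y i * M i k) = 0)"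
    then obtain y where y: "\<forall>i<n-1. y i \<ge> 0" "\<exists>i<n-1. y i \<noteq> 0" "\<forall>k<n. (\<Sum>i<n-1. y i * M i k) = 0"
      by blast
    define v where "v = Matrix.vec (n-1) y"
    have vc: "v \<in> carrier_vec (n-1)" by (simp add: v_def)
    have "transpose_mat ?P *\<^sub>v v = 0\<^sub>v n"
    proof (rule eq_vecI)
      show "dim_vec (transpose_mat ?P *\<^sub>v v) = dim_vec (0\<^sub>v n)" using dimP by simp
      fix k assume "k < dim_vec (0\<^sub>v n)"
      then have k: "k < n" by simp
      have "(\<Sum>i<n-1. v $ i * M i k) = (\<Sum>i<n-1. y i * M i k)"
        by (rule sum.cong) (auto simp: v_def)
      then show "(transpose_mat ?P *\<^sub>v v) $ k = 0\<^sub>v n $ k" using tv[OF vc k] y(3) k by simp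
    qed
    moreover have "\<forall>i < n - 1. v $ i \<ge> 0" using y(1) by (simp add: v_def)
    moreover have "v \<noteq> 0\<^sub>v (n - 1)"
    proof
      assume "v = 0\<^sub>v (n-1)"
      then have "\<forall>i<n-1. y i = 0" by (metis index_vec index_zero_vec(1) v_def)
      with y(2) show False by blast
    qed
    ultimately show "\<exists>y \<in> carrier_vec (n - 1).
          transpose_mat ?P *\<^sub>v y = 0\<^sub>v n \<and> (\<forall>i < n - 1. y $ i \<ge> 0) \<and> y \<noteq> 0\<^sub>v (n - 1)"
      using vc by blast
  qed
  show ?thesis
    unfolding rep vecc
    using gordan[where m="n-1" and n=n and M=M] gordan_easy[where m="n-1" and n=n and M=M] by blast
qed

end
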